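(* Let $(E,\mu)$ and $(F,\nu)$ be fuzzy Riesz spaces and let $T$ be a fuzzy Riesz homomorphism of $E$ onto $F$. The following are equivalent: (1) $T$ is a fuzzy Riesz $\sigma$-homomorphism; (2) for every fuzzy $\sigma$-ideal $A$ in $F$, the inverse image $T^{-1}(A)$ is a fuzzy $\sigma$-ideal in $E$; (3) the kernel $\mathrm{Ker}\,T=\{x\in E: Tx=0\}$ is a fuzzy $\sigma$-ideal in $E$.
   Context: A fuzzy order on a real vector space $E$ is a map $\mu:E\times E\to[0,1]$ with $\mu(x,x)=1$; $\mu(x,y)+\mu(y,x)>1$ implies $x=y$; and $\mu(x,z)\ge\sup_{y}\min(\mu(x,y),\mu(y,z))$. Write $x\le y$ for $\mu(x,y)>\frac12$; suprema/infima are taken with respect to this relation. $(E,\mu)$ is a fuzzy ordered linear space if $\mu(x_1,x_2)>\frac12$ implies $\mu(x_1,x_2)\le\mu(x_1+x,x_2+x)$ for all $x$ and $\mu(x_1,x_2)\le\mu(\alpha x_1,\alpha x_2)$ for all $\alpha>0$; it is a fuzzy Riesz space if $x\vee y=\sup\{x,y\}$ and $x\wedge y=\inf\{x,y\}$ exist for all $x,y$. $E^+=\{x:0\le x\}$, $A^+=A\cap E^+$, $|x|=x\vee(-x)$. $x_n\uparrow x$ means $x_n\le x_{n+1}$ for all $n$ and $x=\sup_n x_n$. A fuzzy ideal is a vector subspace $A$ such that $\mu(|x|,|y|)>\frac12$ and $y\in A$ imply $x\in A$; it is a fuzzy $\sigma$-ideal if $\{x_n\}\subseteq A^+$ and $x_n\uparrow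 x$ in $E$ imply $x\in A$. A fuzzy Riesz homomorphism is a linear map with $T(x\vee y)=Tx\vee Ty$; it is a fuzzy Riesz $\sigma$-homomorphism if $x=\sup_n x_n$ ($n=1,2,\dots$) in $E$ implies $Tx=\sup_n Tx_n$ in $F$. *)

theory Defs
  imports "HOL-Analysis.Analysis"
begin

text \<open>The transitivity condition mu x z >= sup_y min (mu x y) (mu y z) is written as the
  (equivalent, literal) pointwise bound.\<close>
definition fuzzy_order :: "('a \<Rightarrow> 'a \<Rightarrow> real) \<Rightarrow> bool" where
  "fuzzy_order \<mu> \<longleftrightarrow>
     (\<forall>x y. 0 \<le> \<mu> x y \<and> \<mu> x y \<le> 1) \<and>
     (\<forall>x. \<mu> x x = 1) \<and>
     (\<forall>x y. \<mu> x y + \<mu> y x > 1 \<longrightarrow> x = y) \<and>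
     (\<forall>x z. (\<forall>y. min (\<mu> x y) (\<mu> y z) \<le> \<mu> x z))"

definition fle :: "('a \<Rightarrow> 'a \<Rightarrow> real) \<Rightarrow> 'a \<Rightarrow> 'a \<Rightarrow> bool" where
  "fle \<mu> x y \<longleftrightarrow> \<mu> x y > 1/2"

definition is_fsup :: "('a \<Rightarrow> 'a \<Rightarrow> real) \<Rightarrow> 'a set \<Rightarrow> 'a \<Rightarrow> bool" where
  "is_fsup \<mu> S s \<longleftrightarrow> (\<forall>x\<in>S. fle \<mu> x s) \<and> (\<forall>u. (\<forall>x\<in>S. fle \<mu> x u) \<longrightarrow> fle \<mu> s u)"

definition is_finf :: "('a \<Rightarrow> 'a \<Rightarrow> real) \<Rightarrow> 'a set \<Rightarrow> 'a \<Rightarrow> bool" where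
  "is_finf \<mu> S s \<longleftrightarrow> (\<forall>x\<in>S. fle \<mu> s x) \<and> (\<forall>u. (\<forall>x\<in>S. fle \<mu> u x) \<longrightarrow> fle \<mu> u s)"

definition fuzzy_ordered_linear_space :: "('a::real_vector \<Rightarrow> 'a \<Rightarrow> real) \<Rightarrow> bool" where
  "fuzzy_ordered_linear_space \<mu> \<longleftrightarrow> fuzzy_order \<mu> \<and>
     (\<forall>x1 x2. \<mu> x1 x2 > 1/2 \<longrightarrow>
        (\<forall>x. \<mu> x1 x2 \<le> \<mu> (x1 + x) (x2 + x)) \<and>
        (\<forall>\<alpha>::real. \<alpha> > 0 \<longrightarrow> \<mu> x1 x2 \<le> \<mu> (\<alpha> *\<^sub>R x1) (\<alpha> *\<^sub>R x2)))"

definition fuzzy_riesz_space :: "('a::real_vector \<Rightarrow> 'a \<Rightarrow> real) \<Rightarrow> bool" where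
  "fuzzy_riesz_space \<mu> \<longleftrightarrow> fuzzy_ordered_linear_space \<mu> \<and>
     (\<forall>x y. (\<exists>s. is_fsup \<mu> {x, y} s) \<and> (\<exists>i. is_finf \<mu> {x, y} i))"

text \<open>x join y (the supremum is unique by antisymmetry of the fuzzy order).\<close>
definition fjoin :: "('a \<Rightarrow> 'a \<Rightarrow> real) \<Rightarrow> 'a \<Rightarrow> 'a \<Rightarrow> 'a" where
  "fjoin \<mu> x y = (THE s. is_fsup \<mu> {x, y} s)"

definition fabs :: "('a::real_vector \<Rightarrow> 'a \<Rightarrow> real) \<Rightarrow> 'a \<Rightarrow> 'a" where
  "fabs \<mu> x = fjoin \<mu> x (- x)"

definition fuzzy_ideal :: "('a::real_vector \<Rightarrow> 'a \<Rightarrow> real) \<Rightarrow> 'a set \<Rightarrow> bool" where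
  "fuzzy_ideal \<mu> A \<longleftrightarrow> subspace A \<and>
     (\<forall>x y. fle \<mu> (fabs \<mu> x) (fabs \<mu> y) \<and> y \<in> A \<longrightarrow> x \<in> A)"

definition fuzzy_sigma_ideal :: "('a::real_vector \<Rightarrow> 'a \<Rightarrow> real) \<Rightarrow> 'a set \<Rightarrow> bool" where
  "fuzzy_sigma_ideal \<mu> A \<longleftrightarrow> fuzzy_ideal \<mu> A \<and>
     (\<forall>(X::nat \<Rightarrow> 'a) x. (\<forall>n. X n \<in> A \<and> fle \<mu> 0 (X n)) \<and>
        (\<forall>n. fle \<mu> (X n) (X (Suc n))) \<and> is_fsup \<mu> (range X) x \<longrightarrow> x \<in> A)"

definition fuzzy_riesz_hom ::
  "('a::real_vector \<Rightarrow> 'a \<Rightarrow> real) \<Rightarrow> ('b::real_vector \<Rightarrow> 'b \<Rightarrow> real) \<Rightarrow> ('a \<Rightarrow> 'b) \<Rightarrow> bool" where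
  "fuzzy_riesz_hom \<mu> \<nu> T \<longleftrightarrow> linear T \<and>
     (\<forall>x y. T (fjoin \<mu> x y) = fjoin \<nu> (T x) (T y))"

definition fuzzy_riesz_sigma_hom ::
  "('a::real_vector \<Rightarrow> 'a \<Rightarrow> real) \<Rightarrow> ('b::real_vector \<Rightarrow> 'b \<Rightarrow> real) \<Rightarrow> ('a \<Rightarrow> 'b) \<Rightarrow> bool" where
  "fuzzy_riesz_sigma_hom \<mu> \<nu> T \<longleftrightarrow> fuzzy_riesz_hom \<mu> \<nu> T \<and>
     (\<forall>(X::nat \<Rightarrow> 'a) x. is_fsup \<mu> (range X) x \<longrightarrow> is_fsup \<nu> (range (\<lambda>n. T (X n))) (T x))"

end

theory Submission
  imports Defs
begin

lemma fr_fo: "fuzzy_riesz_space \<mu> \<Longrightarrow> fuzzy_order \<mu>"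
  by (simp add: fuzzy_riesz_space_def fuzzy_ordered_linear_space_def)

lemma fr_refl: "fuzzy_riesz_space \<mu> \<Longrightarrow> fle \<mu> x x"
  using fr_fo by (fastforce simp: fuzzy_order_def fle_def)

lemma fr_antisym: "fuzzy_riesz_space \<mu> \<Longrightarrow> fle \<mu> x y \<Longrightarrow> fle \<mu> y x \<Longrightarrow> x = y"
  using fr_fo[of \<mu>] unfolding fuzzy_order_def fle_def by force

lemma fr_trans: "fuzzy_riesz_space \<mu> \<Longrightarrow> fle \<mu> x y \<Longrightarrow> fle \<mu> y z \<Longrightarrow> fle \<mu> x z"
proof -
  assume a: "fuzzy_riesz_space \<mu>" "fle \<mu> x y" "fle \<mu> y z"
  have "min (\<mu> x y) (\<mu> y z) \<le> \<mu> x z" using fr_fo[OF a(1)] unfolding fuzzy_order_def by blast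
  then show ?thesis using a(2,3) unfolding fle_def by linarith
qed

lemma fr_add: "fuzzy_riesz_space \<mu> \<Longrightarrow> fle \<mu> x y \<Longrightarrow> fle \<mu> (x + z) (y + z)"
  unfolding fuzzy_riesz_space_def fuzzy_ordered_linear_space_def fle_def
  by (meson less_le_trans)

lemma fr_sub_iff: "fuzzy_riesz_space \<mu> \<Longrightarrow> fle \<mu> x y \<longleftrightarrow> fle \<mu> (x - y) 0"
proof
  assume a: "fuzzy_riesz_space \<mu>"
  show "fle \<mu> x y \<Longrightarrow> fle \<mu> (x - y) 0" using fr_add[OF a, of x y "-y"] by simp
  show "fle \<mu> (x - y) 0 \<Longrightarrow> fle \<mu> x y" using fr_add[OF a, of "x - y" 0 y] by simp
qed

lemma fr_sup_unique: "fuzzy_riesz_space \<mu> \<Longrightarrow> is_fsup \<mu> S a \<Longrightarrow> is_fsup \<mu> S b \<Longrightarrow> a = b"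
  unfolding is_fsup_def by (meson fr_antisym)

lemma fr_join: "fuzzy_riesz_space \<mu> \<Longrightarrow> is_fsup \<mu> {x, y} (fjoin \<mu> x y)"
proof -
  assume a: "fuzzy_riesz_space \<mu>"
  then obtain s where s: "is_fsup \<mu> {x, y} s" unfolding fuzzy_riesz_space_def by blast
  have "fjoin \<mu> x y = s" unfolding fjoin_def
    using s fr_sup_unique[OF a] by blast
  then show ?thesis using s by simp
qed

lemma fr_ub1: "fuzzy_riesz_space \<mu> \<Longrightarrow> fle \<mu> x (fjoin \<mu> x y)"
  using fr_join unfolding is_fsup_def by blast
lemma fr_ub2: "fuzzy_riesz_space \<mu> \<Longrightarrow> fle \<mu> y (fjoin \<mu> x y)"
  using fr_join unfolding is_fsup_def by blast
lemma fr_least: "fuzzy_riesz_space \<mu> \<Longrightarrow> fle \<mu> x u \<Longrightarrow> fle \<mu> y u \<Longrightarrow> fle \<mu> (fjoin \<mu> x y) u"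
  using fr_join unfolding is_fsup_def by blast

lemma fr_le_join: "fuzzy_riesz_space \<mu> \<Longrightarrow> fle \<mu> x y \<longleftrightarrow> fjoin \<mu> x y = y"
  by (metis fr_antisym fr_least fr_refl fr_ub1 fr_ub2)

lemma hom_lin: "fuzzy_riesz_hom \<mu> \<nu> T \<Longrightarrow> linear T"
  by (simp add: fuzzy_riesz_hom_def)

lemma hom_join: "fuzzy_riesz_hom \<mu> \<nu> T \<Longrightarrow> T (fjoin \<mu> x y) = fjoin \<nu> (T x) (T y)"
  by (simp add: fuzzy_riesz_hom_def)

lemma hom_mono: "fuzzy_riesz_space \<mu> \<Longrightarrow> fuzzy_riesz_space \<nu> \<Longrightarrow> fuzzy_riesz_hom \<mu> \<nu> T
  \<Longrightarrow> fle \<mu> x y \<Longrightarrow> fle \<nu> (T x) (T y)"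
  by (metis fr_le_join hom_join)

lemma hom_abs: "fuzzy_riesz_hom \<mu> \<nu> T \<Longrightarrow> T (fabs \<mu> x) = fabs \<nu> (T x)"
  unfolding fabs_def by (simp add: hom_join hom_lin linear_neg)

theorem theorem2p10:
  fixes \<mu> :: "'a::real_vector \<Rightarrow> 'a \<Rightarrow> real"
    and \<nu> :: "'b::real_vector \<Rightarrow> 'b \<Rightarrow> real"
    and T :: "'a \<Rightarrow> 'b"
  assumes "fuzzy_riesz_space \<mu>"
    and "fuzzy_riesz_space \<nu>"
    and "fuzzy_riesz_hom \<mu> \<nu> T"
    and "surj T"
  shows "(fuzzy_riesz_sigma_hom \<mu> \<nu> T \<longrightarrow> (\<forall>A. fuzzy_sigma_ideal \<nu> A \<longrightarrow> fuzzy_sigma_ideal \<mu> (T -` A)))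
       \<and> ((\<forall>A. fuzzy_sigma_ideal \<nu> A \<longrightarrow> fuzzy_sigma_ideal \<mu> (T -` A)) \<longrightarrow> fuzzy_sigma_ideal \<mu> {x. T x = 0})
       \<and> (fuzzy_sigma_ideal \<mu> {x. T x = 0} \<longrightarrow> fuzzy_riesz_sigma_hom \<mu> \<nu> T)"
proof (intro conjI impI allI)
  note E = assms(1) and F = assms(2) and H = assms(3)
  have lin: "linear T" using H by (rule hom_lin)
  have T0: "T 0 = 0" using lin by (rule linear_0)
  {
    fix A assume sh: "fuzzy_riesz_sigma_hom \<mu> \<nu> T" and A: "fuzzy_sigma_ideal \<nu> A"
    have sub: "subspace (T -` A)"
      using A lin linear_subspace_vimage unfolding fuzzy_sigma_ideal_def fuzzy_ideal_def by blast
    have id: "x \<in> T -` A" if "fle \<mu> (fabs \<mu> x) (fabs \<mu> y)" "y \<in> T -` A" for x y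
    proof -
      have "fle \<nu> (fabs \<nu> (T x)) (fabs \<nu> (T y))"
        using hom_mono[OF E F H that(1)] hom_abs[OF H] by simp
      then show ?thesis using that(2) A unfolding fuzzy_sigma_ideal_def fuzzy_ideal_def by blast
    qed
    have sg: "x \<in> T -` A" if "\<forall>n. X n \<in> T -` A \<and> fle \<mu> 0 (X n)"
      "\<forall>n. fle \<mu> (X n) (X (Suc n))" "is_fsup \<mu> (range X) x" for X x
    proof -
      have "\<forall>n. T (X n) \<in> A \<and> fle \<nu> 0 (T (X n))"
        using that(1) hom_mono[OF E F H, of 0] T0 by fastforce
      moreover have "\<forall>n. fle \<nu> (T (X n)) (T (X (Suc n)))"
        using that(2) hom_mono[OF E F H] by blast
      moreover have "is_fsup \<nu> (range (\<lambda>n. T (X n))) (T x)"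
        using sh that(3) unfolding fuzzy_riesz_sigma_hom_def by blast
      ultimately have "T x \<in> A" using A unfolding fuzzy_sigma_ideal_def
        by (metis (no_types, lifting))
      then show ?thesis by simp
    qed
    show "fuzzy_sigma_ideal \<mu> (T -` A)"
      unfolding fuzzy_sigma_ideal_def fuzzy_ideal_def using sub id sg by blast
  }
  {
    assume all: "\<forall>A. fuzzy_sigma_ideal \<nu> A \<longrightarrow> fuzzy_sigma_ideal \<mu> (T -` A)"
    have abs0: "fabs \<nu> 0 = 0" unfolding fabs_def using fr_le_join[OF F] fr_refl[OF F] by simp
    have id: "x \<in> {0}" if "fle \<nu> (fabs \<nu> x) (fabs \<nu> y)" "y \<in> {0::'b}" for x y
    proof -
      have l: "fle \<nu> (fabs \<nu> x) 0" using that abs0 by simp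
      have l': "fle \<nu> (fjoin \<nu> x (-x)) 0" using l unfolding fabs_def .
      have "fle \<nu> x 0" using fr_trans[OF F fr_ub1[OF F] l'] .
      moreover have "fle \<nu> (-x) 0" using fr_trans[OF F fr_ub2[OF F] l'] .
      then have "fle \<nu> 0 x" using fr_add[OF F, of "-x" 0 x] by simp
      ultimately show ?thesis using fr_antisym[OF F] by simp
    qed
    have sg: "x \<in> {0}" if "\<forall>n. X n \<in> {0::'b} \<and> fle \<nu> 0 (X n)"
      "is_fsup \<nu> (range X) x" for X x
    proof -
      have r: "range X = {0}" using that(1) by auto
      have "is_fsup \<nu> {0} 0" unfolding is_fsup_def using fr_refl[OF F] by simp
      then show ?thesis using fr_sup_unique[OF F] that(2) r by simp
    qed
    have "fuzzy_sigma_ideal \<nu> {0}"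
      unfolding fuzzy_sigma_ideal_def fuzzy_ideal_def using subspace_single_0 id sg by blast
    then have "fuzzy_sigma_ideal \<mu> (T -` {0})" using all by blast
    moreover have "T -` {0} = {x. T x = 0}" by auto
    ultimately show "fuzzy_sigma_ideal \<mu> {x. T x = 0}" by simp
  }
  {
    assume K: "fuzzy_sigma_ideal \<mu> {x. T x = 0}"
    have "is_fsup \<nu> (range (\<lambda>n. T (X n))) (T x)" if sup: "is_fsup \<mu> (range X) x" for X :: "nat \<Rightarrow> 'a" and x
    proof -
      have ub: "fle \<nu> (T (X n)) (T x)" for n
        using sup hom_mono[OF E F H] unfolding is_fsup_def by blast
      have least: "fle \<nu> (T x) u" if u: "\<forall>n. fle \<nu> (T (X n)) u" for u
      proof -
        obtain y where y: "u = T y" using assms(4) by blast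
        define P where "P (n::nat) = fjoin \<mu> (X n - y) 0" for n
        define W where "W = (rec_nat :: _ \<Rightarrow> (nat \<Rightarrow> _ \<Rightarrow> _) \<Rightarrow> nat \<Rightarrow> _) (P 0) (\<lambda>n w. fjoin \<mu> w (P (Suc n)))"
        have W0: "W 0 = P 0" and WS: "W (Suc n) = fjoin \<mu> (W n) (P (Suc n))" for n
          unfolding W_def by simp_all
        have TP: "T (P n) = 0" for n
        proof -
          have "fle \<nu> (T (X n) - T y) 0" using u y fr_sub_iff[OF F] by blast
          then have "fjoin \<nu> (T (X n) - T y) 0 = 0" using fr_le_join[OF F] by blast
          then show ?thesis unfolding P_def using hom_join[OF H] T0 linear_diff[OF lin] by simp
        qed
        have TW: "T (W n) = 0" for n
          by (induction n) (simp_all add: W0 WS TP hom_join[OF H] fr_le_join[OF F, symmetric] fr_refl[OF F])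
        have PW: "fle \<mu> (P n) (W n)" for n
          by (cases n) (simp_all add: W0 WS fr_refl[OF E] fr_ub2[OF E])
        have Wpos: "fle \<mu> 0 (W n)" for n
          using fr_trans[OF E fr_ub2[OF E] PW[unfolded P_def]] .
        have Wmono: "fle \<mu> (W n) (W (Suc n))" for n
          using WS fr_ub1[OF E] by simp
        define z where "z = fjoin \<mu> (x - y) 0"
        have Wz: "fle \<mu> (W n) z" for n
        proof (induction n)
          case 0
          have "fle \<mu> (X 0) x" using sup unfolding is_fsup_def by blast
          then have "fle \<mu> (X 0 - y) (x - y)" using fr_add[OF E, of _ _ "-y"] by simp
          then show ?case unfolding W0 P_def z_def
            by (meson E fr_least fr_trans fr_ub1 fr_ub2)
        next
          case (Suc n)
          have "fle \<mu> (X (Suc n)) x" using sup unfolding is_fsup_def by blast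
          then have "fle \<mu> (X (Suc n) - y) (x - y)" using fr_add[OF E, of _ _ "-y"] by simp
          then have "fle \<mu> (P (Suc n)) z" unfolding P_def z_def
            by (meson E fr_least fr_trans fr_ub1 fr_ub2)
          then show ?case unfolding WS using Suc fr_least[OF E] by blast
        qed
        have zl: "fle \<mu> z v" if v: "\<forall>n. fle \<mu> (W n) v" for v
        proof -
          have v0: "fle \<mu> 0 v" using fr_trans[OF E Wpos] v by blast
          have "fle \<mu> (X n - y) v" for n
            using fr_trans[OF E fr_ub1[OF E] fr_trans[OF E PW[unfolded P_def]]] v by blast
          then have "fle \<mu> (X n) (v + y)" for n using fr_add[OF E, of "X n - y" v y] by simp
          then have "fle \<mu> x (v + y)" using sup unfolding is_fsup_def by blast
          then have "fle \<mu> (x - y) v" using fr_add[OF E, of x "v + y" "-y"] by simp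
          then show ?thesis unfolding z_def using v0 fr_least[OF E] by blast
        qed
        have "is_fsup \<mu> (range W) z" unfolding is_fsup_def using Wz zl by blast
        then have "z \<in> {x. T x = 0}" using K Wpos Wmono TW unfolding fuzzy_sigma_ideal_def by blast
        then have "fjoin \<nu> (T x - T y) 0 = 0"
          unfolding z_def using hom_join[OF H] T0 linear_diff[OF lin] by simp
        then have "fle \<nu> (T x - T y) 0" using fr_le_join[OF F] by blast
        then show ?thesis using y fr_sub_iff[OF F] by blast
      qed
      show ?thesis unfolding is_fsup_def using ub least by blast
    qed
    then show "fuzzy_riesz_sigma_hom \<mu> \<nu> T" unfolding fuzzy_riesz_sigma_hom_def using H by blast
  }
qed

end
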